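(* Let $\{x,y\}$ be a Cartesian coordinate system in the Euclidean plane $\mathbb{E}^2$ and let $z := \frac{1}{2}(x - i y)$. Let $\xi$ be a non-trivial global conformal Killing vector field (GCKV) of $\mathbb{E}^2$, and let $\mu_0,\mu_1,\mu_2 \in \mathbb{C}$ be the complex constants such that \[ \xi = \left(\mu_0 + \mu_1 z + \tfrac{1}{2}\mu_2 z^2\right)\partial_z + \left(\overline{\mu_0} + \overline{\mu_1}\,\overline{z} + \tfrac{1}{2}\overline{\mu_2}\,\overline{z}^2\right)\partial_{\overline{z}}. \] For $\mathbb{A} = \begin{pmatrix} \alpha & \beta \\ \gamma & \delta \end{pmatrix} \in SL(2,\mathbb{C})$ (i.e. $\alpha\delta - \beta\gamma = 1$), let $\chi^{\mathbb{A}}$ be the Möbius transformation $z \mapsto \frac{\alpha z + \beta}{\gamma z + \delta}$ of the Riemann sphere $\mathbb{C}\cup\{\infty\}$. Then the push-forward $\chi^{\mathbb{A}}_{\star}(\xi)$ is written in canonical form with respect to $\{x,y\}$, i.e. takes the form $(\mu_0' + z^2)\partial_z + (\overline{\mu_0'} + \overline{z}^2)\partial_{\overline{z}}$ for some $\mu_0' \in \mathbb{C}$, if and only if \[ \mathbb{A} = \begin{pmatrix} \frac{1}{2}(\delta\mu_2 - \gamma\mu_1) & \frac{1}{2}\delta\mu_1 - \gamma\mu_0 \\ \gamma & \delta \end{pmatrix}, \qquad \frac{1}{2}\delta^2\mu_2 - \gamma\delta\mu_1 + \gamma^2\mu_0 = 1. \] Moreover, for any such $\mathbb{A}$, \[ \chi^{\mathbb{A}}_{\star}(\xi)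 = \left(\tfrac{1}{4}\left(\sigma_{\{\mu\}} - i\tau_{\{\mu\}}\right) + z^2\right)\partial_z + \left(\tfrac{1}{4}\left(\sigma_{\{\mu\}} + i\tau_{\{\mu\}}\right) + \overline{z}^2\right)\partial_{\overline{z}}, \] where the real numbers $\sigma_{\{\mu\}}, \tau_{\{\mu\}}$ are defined by $\sigma_{\{\mu\}} - i\tau_{\{\mu\}} := 2\mu_0\mu_2 - \mu_1^2$.
   Context: A conformal Killing vector of $\mathbb{E}^2$ is called global (GCKV) if it extends smoothly to the one-point compactification (Riemann sphere) $\mathbb{S}^2$; in the complex coordinate $z = \frac{1}{2}(x-iy)$ these are exactly the vector fields of the form $(\mu_0 + \mu_1 z + \frac{1}{2}\mu_2 z^2)\partial_z + \text{c.c.}$ with $\mu_0,\mu_1,\mu_2\in\mathbb{C}$. Such a field is called canonical with respect to $\{x,y\}$ when $\mu_1 = 0$ and $\mu_2 = 2$. Under a Möbius transformation $\chi^{\mathbb{A}}$, $\mathbb{A} = \begin{pmatrix}\alpha&\beta\\\gamma&\delta\end{pmatrix}$, $\alpha\delta-\beta\gamma=1$, the parameters of $\chi^{\mathbb{A}}_{\star}(\xi)$ are $\mu_0' = \alpha^2\mu_0 - \alpha\beta\mu_1 + \frac{1}{2}\beta^2\mu_2$, $\mu_1' = -2\alpha\gamma\mu_0 + (\alpha\delta+\beta\gamma)\mu_1 - \beta\delta\mu_2$, $\mu_2' = 2\gamma^2\mu_0 - 2\gamma\delta\mu_1 + \delta^2\mu_2$, and the quantity $2\mu_0\mu_2 -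 \mu_1^2$ is invariant under this transformation. *)

theory Defs
  imports Complex_Main
begin

text \<open>A global conformal Killing vector (GCKV) of the Euclidean plane is
  represented by its parameter triple (mu0, mu1, mu2), corresponding to the
  field (mu0 + mu1 z + mu2 z^2/2) d/dz + c.c. with z = (x - i y)/2.
  It is non-trivial iff the triple is non-zero.\<close>

type_synonym gckv = "complex \<times> complex \<times> complex"

definition gckv_coeff :: "gckv \<Rightarrow> complex \<Rightarrow> complex" where
  "gckv_coeff m z = (case m of (m0, m1, m2) \<Rightarrow> m0 + m1 * z + m2 * z^2 / 2)"

definition nontrivial_gckv :: "gckv \<Rightarrow> bool" where
  "nontrivial_gckv m \<longleftrightarrow> m \<noteq> (0, 0, 0)"

definition canonical_gckv :: "gckv \<Rightarrow> bool" where
  "canonical_gckv m \<longleftrightarrow> fst (snd m) = 0 \<and> snd (snd m) = 2"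

definition moebius :: "complex \<Rightarrow> complex \<Rightarrow> complex \<Rightarrow> complex \<Rightarrow> complex \<Rightarrow> complex" where
  "moebius \<alpha> \<beta> \<gamma> \<delta> z = (\<alpha> * z + \<beta>) / (\<gamma> * z + \<delta>)"

definition pushforward :: "complex \<Rightarrow> complex \<Rightarrow> complex \<Rightarrow> complex \<Rightarrow> gckv \<Rightarrow> gckv" where
  "pushforward \<alpha> \<beta> \<gamma> \<delta> m = (case m of (m0, m1, m2) \<Rightarrow>
     (\<alpha>^2 * m0 - \<alpha> * \<beta> * m1 + \<beta>^2 * m2 / 2,
      - 2 * \<alpha> * \<gamma> * m0 + (\<alpha> * \<delta> + \<beta> * \<gamma>) * m1 - \<beta> * \<delta> * m2,
      2 * \<gamma>^2 * m0 - 2 * \<gamma> * \<delta> * m1 + \<delta>^2 * m2))"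

definition sigma_mu :: "gckv \<Rightarrow> real" where
  "sigma_mu m = (case m of (m0, m1, m2) \<Rightarrow> Re (2 * m0 * m2 - m1^2))"

definition tau_mu :: "gckv \<Rightarrow> real" where
  "tau_mu m = (case m of (m0, m1, m2) \<Rightarrow> - Im (2 * m0 * m2 - m1^2))"

end

theory Submission
  imports Defs
begin

lemma inv_id:
  fixes m0 m1 m2 a b c d :: complex
  shows "2 * (a^2 * m0 - a * b * m1 + b^2 * m2 / 2) * (2 * c^2 * m0 - 2 * c * d * m1 + d^2 * m2)
        - (- 2 * a * c * m0 + (a * d + b * c) * m1 - b * d * m2)^2
        = (a*d - b*c)^2 * (2 * m0 * m2 - m1^2)"
  by (simp add: field_simps power2_eq_square)

theorem proposition7p2:
  fixes \<mu>0 \<mu>1 \<mu>2 \<alpha> \<beta> \<gamma> \<delta> :: complex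
  assumes "nontrivial_gckv (\<mu>0, \<mu>1, \<mu>2)"
    and "\<alpha> * \<delta> - \<beta> * \<gamma> = 1"
  shows "(canonical_gckv (pushforward \<alpha> \<beta> \<gamma> \<delta> (\<mu>0, \<mu>1, \<mu>2)) \<longleftrightarrow>
           (\<alpha> = (\<delta> * \<mu>2 - \<gamma> * \<mu>1) / 2 \<and> \<beta> = \<delta> * \<mu>1 / 2 - \<gamma> * \<mu>0 \<and>
            \<delta>^2 * \<mu>2 / 2 - \<gamma> * \<delta> * \<mu>1 + \<gamma>^2 * \<mu>0 = 1))
       \<and> (canonical_gckv (pushforward \<alpha> \<beta> \<gamma> \<delta> (\<mu>0, \<mu>1, \<mu>2)) \<longrightarrow>
           (\<forall>z. gckv_coeff (pushforward \<alpha> \<beta> \<gamma> \<delta> (\<mu>0, \<mu>1, \<mu>2)) z =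
              (complex_of_real (sigma_mu (\<mu>0, \<mu>1, \<mu>2))
                 - \<i> * complex_of_real (tau_mu (\<mu>0, \<mu>1, \<mu>2))) / 4 + z^2))"
proof -
  define a where "a = - 2 * \<gamma> * \<mu>0 + \<delta> * \<mu>1"
  define b where "b = \<gamma> * \<mu>1 - \<delta> * \<mu>2"
  have det: "\<alpha> * \<delta> - \<beta> * \<gamma> = 1" by fact
  have m1: "- 2 * \<alpha> * \<gamma> * \<mu>0 + (\<alpha> * \<delta> + \<beta> * \<gamma>) * \<mu>1 - \<beta> * \<delta> * \<mu>2 = a*\<alpha> + b*\<beta>"
    unfolding a_def b_def by algebra
  have m2: "2 * \<gamma>^2 * \<mu>0 - 2 * \<gamma> * \<delta> * \<mu>1 + \<delta>^2 * \<mu>2 = - (a*\<gamma> + b*\<delta>)"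
    unfolding a_def b_def by algebra
  have c2: "2 * \<gamma>^2 * \<mu>0 - 2 * \<gamma> * \<delta> * \<mu>1 + \<delta>^2 * \<mu>2 = 2 \<longleftrightarrow>
            \<delta>^2 * \<mu>2 / 2 - \<gamma> * \<delta> * \<mu>1 + \<gamma>^2 * \<mu>0 = 1"
    by (auto simp: field_simps)
  have canon: "canonical_gckv (pushforward \<alpha> \<beta> \<gamma> \<delta> (\<mu>0, \<mu>1, \<mu>2)) \<longleftrightarrow>
     a*\<alpha> + b*\<beta> = 0 \<and> a*\<gamma> + b*\<delta> = -2"
    unfolding canonical_gckv_def pushforward_def
    apply (simp only: prod.case fst_conv snd_conv m1 m2)
    by (metis add.inverse_inverse minus_equation_iff)
  have P1: "canonical_gckv (pushforward \<alpha> \<beta> \<gamma> \<delta> (\<mu>0, \<mu>1, \<mu>2)) \<longleftrightarrow>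
           (\<alpha> = (\<delta> * \<mu>2 - \<gamma> * \<mu>1) / 2 \<and> \<beta> = \<delta> * \<mu>1 / 2 - \<gamma> * \<mu>0 \<and>
            \<delta>^2 * \<mu>2 / 2 - \<gamma> * \<delta> * \<mu>1 + \<gamma>^2 * \<mu>0 = 1)"
  proof
    assume "canonical_gckv (pushforward \<alpha> \<beta> \<gamma> \<delta> (\<mu>0, \<mu>1, \<mu>2))"
    then have e1: "a*\<alpha> + b*\<beta> = 0" and e2: "a*\<gamma> + b*\<delta> = -2" using canon by auto
    have "\<alpha> * (a*\<gamma> + b*\<delta>) = \<gamma>*(a*\<alpha> + b*\<beta>) + b*(\<alpha> * \<delta> - \<beta> * \<gamma>)" by algebra
    then have "\<alpha> * (-2) = b" using e1 e2 det by simp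
    then have A: "\<alpha> = (\<delta> * \<mu>2 - \<gamma> * \<mu>1) / 2" unfolding b_def by (simp add: field_simps)
    have "\<beta> * (a*\<gamma> + b*\<delta>) = \<delta>*(a*\<alpha> + b*\<beta>) - a*(\<alpha> * \<delta> - \<beta> * \<gamma>)" by algebra
    then have "\<beta> * (-2) = - a" using e1 e2 det by simp
    then have B: "\<beta> = \<delta> * \<mu>1 / 2 - \<gamma> * \<mu>0" unfolding a_def by (simp add: field_simps)
    have "\<delta>^2 * \<mu>2 / 2 - \<gamma> * \<delta> * \<mu>1 + \<gamma>^2 * \<mu>0 = 1"
      using c2 m2 e2 by simp
    with A B show "\<alpha> = (\<delta> * \<mu>2 - \<gamma> * \<mu>1) / 2 \<and> \<beta> = \<delta> * \<mu>1 / 2 - \<gamma> * \<mu>0 \<and>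
            \<delta>^2 * \<mu>2 / 2 - \<gamma> * \<delta> * \<mu>1 + \<gamma>^2 * \<mu>0 = 1" by simp
  next
    assume H: "\<alpha> = (\<delta> * \<mu>2 - \<gamma> * \<mu>1) / 2 \<and> \<beta> = \<delta> * \<mu>1 / 2 - \<gamma> * \<mu>0 \<and>
            \<delta>^2 * \<mu>2 / 2 - \<gamma> * \<delta> * \<mu>1 + \<gamma>^2 * \<mu>0 = 1"
    then have A: "\<alpha> = - b / 2" and B: "\<beta> = a / 2" unfolding a_def b_def by (auto simp: field_simps)
    have "a*\<alpha> + b*\<beta> = 0" unfolding A B by (simp add: algebra_simps)
    moreover have "a*\<gamma> + b*\<delta> = -2" using H c2 m2 by (metis add.inverse_inverse)
    ultimately show "canonical_gckv (pushforward \<alpha> \<beta> \<gamma> \<delta> (\<mu>0, \<mu>1, \<mu>2))" using canon by simp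
  qed
  have P2: "\<forall>z. gckv_coeff (pushforward \<alpha> \<beta> \<gamma> \<delta> (\<mu>0, \<mu>1, \<mu>2)) z =
              (complex_of_real (sigma_mu (\<mu>0, \<mu>1, \<mu>2))
                 - \<i> * complex_of_real (tau_mu (\<mu>0, \<mu>1, \<mu>2))) / 4 + z^2"
    if C: "canonical_gckv (pushforward \<alpha> \<beta> \<gamma> \<delta> (\<mu>0, \<mu>1, \<mu>2))"
  proof
    fix z
    obtain p0 p1 p2 where pf: "pushforward \<alpha> \<beta> \<gamma> \<delta> (\<mu>0, \<mu>1, \<mu>2) = (p0, p1, p2)"
      by (cases "pushforward \<alpha> \<beta> \<gamma> \<delta> (\<mu>0, \<mu>1, \<mu>2)") auto
    have p12: "p1 = 0" "p2 = 2" using C pf unfolding canonical_gckv_def by auto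
    have "2 * p0 * p2 - p1^2 = (\<alpha>*\<delta> - \<beta>*\<gamma>)^2 * (2 * \<mu>0 * \<mu>2 - \<mu>1^2)"
      using pf inv_id[of \<alpha> \<mu>0 \<beta> \<mu>1 \<mu>2 \<gamma> \<delta>] unfolding pushforward_def by (auto simp: mult.assoc)
    then have p0: "p0 = (2 * \<mu>0 * \<mu>2 - \<mu>1^2) / 4" using p12 det by (simp add: mult.commute)
    have w: "complex_of_real (sigma_mu (\<mu>0, \<mu>1, \<mu>2)) - \<i> * complex_of_real (tau_mu (\<mu>0, \<mu>1, \<mu>2))
          = 2 * \<mu>0 * \<mu>2 - \<mu>1^2"
      unfolding sigma_mu_def tau_mu_def by (simp add: complex_eq_iff)
    show "gckv_coeff (pushforward \<alpha> \<beta> \<gamma> \<delta> (\<mu>0, \<mu>1, \<mu>2)) z =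
              (complex_of_real (sigma_mu (\<mu>0, \<mu>1, \<mu>2))
                 - \<i> * complex_of_real (tau_mu (\<mu>0, \<mu>1, \<mu>2))) / 4 + z^2"
      unfolding pf w gckv_coeff_def using p12 p0 by simp
  qed
  show ?thesis using P1 P2 by blast
qed

end
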